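(* Let $n,p$ be positive integers with $n-p-1>0$ and $\gamma\ge0$, and let $\pi_{\mathrm{MSVS2}}(M)=\det(M^\top M)^{-(n-p-1)/2}\prod_{i=1}^p\|M_{\cdot i}\|^{-\gamma}$ on $\mathbb R^{n\times p}$, where $M_{\cdot i}$ is the $i$-th column of $M$. Then at every $M$ with $M^\top M$ nonsingular, $$\Delta\pi_{\mathrm{MSVS2}}(M)=\gamma(\gamma+n-2p)\left(\sum_{i=1}^p\|M_{\cdot i}\|^{-2}\right)\pi_{\mathrm{MSVS2}}(M),$$ where $\Delta=\sum_{a=1}^n\sum_{i=1}^p\partial^2/\partial M_{ai}^2$. *)

theory Defs
  imports "HOL-Analysis.Analysis"
begin

text \<open>Matrices in R^(n x p) are rendered as real^'p^'n (rows indexed by 'n,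
columns by 'p); n = CARD('n), p = CARD('p).\<close>

definition entry_dir :: "'n::finite \<Rightarrow> 'p::finite \<Rightarrow> real^'p^'n" where
  "entry_dir a i = (\<chi> b j. if b = a \<and> j = i then 1 else 0)"

definition second_partial ::
  "(real^'p::finite^'n::finite \<Rightarrow> real) \<Rightarrow> real^'p^'n \<Rightarrow> 'n \<Rightarrow> 'p \<Rightarrow> real" where
  "second_partial f M a i = deriv (deriv (\<lambda>t. f (M + t *\<^sub>R entry_dir a i))) 0"

definition laplacian ::
  "(real^'p::finite^'n::finite \<Rightarrow> real) \<Rightarrow> real^'p^'n \<Rightarrow> real" where
  "laplacian f M = (\<Sum>a\<in>UNIV. \<Sum>i\<in>UNIV. second_partial f M a i)"

definition pi_MSVS2 :: "real \<Rightarrow> real^'p::finite^'n::finite \<Rightarrow> real" where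
  "pi_MSVS2 \<gamma> M =
     det (transpose M ** M) powr (- (real CARD('n) - real CARD('p) - 1) / 2)
     * (\<Prod>i\<in>UNIV. norm (column i M) powr (- \<gamma>))"

end

theory Submission
  imports Defs
begin


lemma det_col_update:
  fixes y :: "real^'n::finite"
  shows "det (mat 1 + (\<chi> j k. if k = i then y$j else 0) :: real^'n^'n) = 1 + y$i"
proof -
  have "det ((\<chi> j k. if k = i then (mat 1 *v (axis i 1 + y))$j else (mat 1 :: real^'n^'n)$j$k) :: real^'n^'n)
     = (axis i 1 + y)$i * det (mat 1 :: real^'n^'n)"
    by (rule cramer_lemma)
  moreover have "((\<chi> j k. if k = i then (mat 1 *v (axis i 1 + y))$j else (mat 1 :: real^'n^'n)$j$k) :: real^'n^'n)
     = mat 1 + (\<chi> j k. if k = i then y$j else 0)"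
    by (simp only: matrix_vector_mul_lid) (simp add: vec_eq_iff mat_def axis_def)
  ultimately show ?thesis by (simp add: axis_def)
qed

lemma det_row_update:
  fixes y :: "real^'n::finite"
  shows "det (mat 1 + (\<chi> j k. if j = i then y$k else 0) :: real^'n^'n) = 1 + y$i"
proof -
  have "transpose (mat 1 + (\<chi> j k. if j = i then y$k else 0) :: real^'n^'n) = mat 1 + (\<chi> j k. if k = i then y$j else 0)"
    by (simp add: vec_eq_iff transpose_def mat_def)
  then show ?thesis using det_col_update[of i y] det_transpose by metis
qed


definition outer :: "real^'n::finite \<Rightarrow> real^'m::finite \<Rightarrow> real^'m^'n" where
  "outer u v = (\<chi> j k. u$j * v$k)"

lemma outer_nth[simp]: "outer u v $ j $ k = u$j * v$k"
  by (simp add: outer_def)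

lemma transpose_outer[simp]: "transpose (outer u v) = outer v u"
  by (simp add: vec_eq_iff transpose_def)

lemma outer_mult_left: "outer u v ** X = outer u (transpose X *v v)"
  by (simp add: vec_eq_iff matrix_matrix_mult_def matrix_vector_mult_def transpose_def sum_distrib_left mult_ac)

lemma outer_mult_right: "X ** outer u v = outer (X *v u) v"
  by (simp add: vec_eq_iff matrix_matrix_mult_def matrix_vector_mult_def sum_distrib_left sum_distrib_right mult_ac)

lemma outer_mult_outer: "outer u v ** outer w z = (v \<bullet> w) *\<^sub>R outer u z"
  by (simp add: vec_eq_iff matrix_matrix_mult_def inner_vec_def sum_distrib_left sum_distrib_left sum_distrib_right mult_ac)

lemma outer_mult_vec: "outer u v *v w = (v \<bullet> w) *\<^sub>R u"
  by (simp add: vec_eq_iff matrix_vector_mult_def inner_vec_def sum_distrib_left sum_distrib_right mult_ac)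

lemma outer_scale_right: "outer u (c *\<^sub>R v) = c *\<^sub>R outer u v"
  by (simp add: vec_eq_iff)

lemma entry_dir_outer: "entry_dir a i = outer (axis a 1) (axis i 1)"
  by (simp add: vec_eq_iff entry_dir_def axis_def)

lemma transpose_axis: "transpose M *v axis a (1::real) = M $ a"
  by (simp add: vec_eq_iff matrix_vector_mult_def transpose_def axis_def if_distrib cong: if_cong)

lemma det_outer_row: "det (mat 1 + outer (axis i 1) w :: real^'n::finite^'n) = 1 + w$i"
proof -
  have "outer (axis i 1) w = (\<chi> j k. if j = i then w$k else 0)"
    by (simp add: vec_eq_iff axis_def)
  then show ?thesis by (simp add: det_row_update)
qed

lemma det_outer_col: "det (mat 1 + outer y (axis i 1) :: real^'n::finite^'n) = 1 + y$i"
proof -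
  have "outer y (axis i 1) = (\<chi> j k. if k = i then y$j else 0)"
    by (simp add: vec_eq_iff axis_def)
  then show ?thesis by (simp add: det_col_update)
qed


lemma inv_sym:
  fixes A B :: "real^'p::finite^'p"
  assumes AB: "A ** B = mat 1" and BA: "B ** A = mat 1" and As: "transpose A = A"
  shows "transpose B = B"
proof -
  have "transpose B ** A = mat 1"
    using AB by (metis As matrix_transpose_mul transpose_mat)
  then have "transpose B = transpose B ** (A ** B)" using AB by simp
  also have "\<dots> = B" using \<open>transpose B ** A = mat 1\<close> by (simp add: matrix_mul_assoc)
  finally show ?thesis .
qed

lemma mm_add_r: "((X::real^'m::finite^'n::finite) + Y) ** (Z::real^'k::finite^'m) = X ** Z + Y ** Z"
  by (simp add: vec_eq_iff matrix_matrix_mult_def algebra_simps sum.distrib)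
lemma mm_add_l: "(Z::real^'m::finite^'n::finite) ** ((X::real^'k::finite^'m) + Y) = Z ** X + Z ** Y"
  by (simp add: vec_eq_iff matrix_matrix_mult_def algebra_simps sum.distrib)
lemma mm_scale_l: "(c *\<^sub>R (X::real^'m::finite^'n::finite)) ** (Y::real^'k::finite^'m) = c *\<^sub>R (X ** Y)"
  by (simp add: vec_eq_iff matrix_matrix_mult_def sum_distrib_left mult_ac)
lemma mm_scale_r: "(X::real^'m::finite^'n::finite) ** (c *\<^sub>R (Y::real^'k::finite^'m)) = c *\<^sub>R (X ** Y)"
  by (simp add: vec_eq_iff matrix_matrix_mult_def sum_distrib_left mult_ac)
lemma tr_add: "transpose ((X::real^'m::finite^'n::finite) + Y) = transpose X + transpose Y"
  by (simp add: vec_eq_iff transpose_def)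
lemma mv_add_l: "((X::real^'m::finite^'n::finite) + Y) *v v = X *v v + Y *v v"
  by (simp add: vec_eq_iff matrix_vector_mult_def algebra_simps sum.distrib)
lemma mv_scale_l: "(c *\<^sub>R (X::real^'m::finite^'n::finite)) *v v = c *\<^sub>R (X *v v)"
  by (simp add: vec_eq_iff matrix_vector_mult_def sum_distrib_left mult_ac)
lemma mv_scale_r: "(X::real^'m::finite^'n::finite) *v (c *\<^sub>R v) = c *\<^sub>R (X *v v)"
  by (simp add: vec_eq_iff matrix_vector_mult_def sum_distrib_left mult_ac)
lemma mv_add_r: "(X::real^'m::finite^'n::finite) *v (u + v) = X *v u + X *v v"
  by (simp add: vec_eq_iff matrix_vector_mult_def algebra_simps sum.distrib)

lemma outer_add_left: "outer (u + v) w = outer u w + outer v w"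
  by (simp add: vec_eq_iff algebra_simps)
lemma outer_scale_left: "outer (c *\<^sub>R u) w = c *\<^sub>R outer u w"
  by (simp add: vec_eq_iff)

lemma det_update:
  fixes M :: "real^'p::finite^'n::finite" and B :: "real^'p^'p"
  assumes AB: "(transpose M ** M) ** B = mat 1" and BA: "B ** (transpose M ** M) = mat 1"
    and nz: "1 + t * (B *v (M$a))$i \<noteq> 0"
  shows "det (transpose (M + t *\<^sub>R entry_dir a i) ** (M + t *\<^sub>R entry_dir a i)) =
     det (transpose M ** M) * ((1 + t * (B *v (M$a))$i)^2 + t^2 * (1 - (M$a) \<bullet> (B *v (M$a))) * B$i$i)"
proof -
  define A where "A = transpose M ** M"
  define m where "m = M$a"
  define c where "c = (B *v m)$i"
  define d where "d = m \<bullet> (B *v m)"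
  define b where "b = B$i$i"
  define ei :: "real^'p" where "ei = axis i 1"
  define ea :: "real^'n" where "ea = axis a 1"
  define s where "s = t^2 * (1 - d) / (1 + t*c)"
  define y where "y = t *\<^sub>R (B *v m) + s *\<^sub>R column i B"
  define L where "L = mat 1 + outer ei (t *\<^sub>R (B *v m))"
  define R where "R = mat 1 + outer y ei"
  have nz': "1 + t*c \<noteq> 0" using nz by (simp add: c_def m_def)
  have As: "transpose A = A" by (simp add: A_def matrix_transpose_mul)
  have Bs: "transpose B = B" using inv_sym[OF AB[folded A_def] BA[folded A_def] As] .
  have Bsym: "B$j$k = B$k$j" for j k
    using arg_cong[OF Bs, of "\<lambda>X. X$k$j"] by (simp add: transpose_def)
  have AB': "A ** B = mat 1" "B ** A = mat 1" using AB BA by (simp_all add: A_def)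
  have ABm: "A *v (B *v v) = v" for v
    by (simp add: matrix_vector_mul_assoc AB'(1))
  have Aci: "A *v column i B = ei"
  proof -
    have "column i B = B *v ei" by (simp add: ei_def vec_eq_iff column_def matrix_vector_mult_def axis_def if_distrib cong: if_cong)
    then show ?thesis by (simp add: ABm)
  qed
  have mci: "m \<bullet> column i B = c"
    by (simp add: c_def inner_vec_def column_def matrix_vector_mult_def mult.commute Bsym)
  have tM: "transpose M *v ea = m"
    by (simp add: ea_def m_def vec_eq_iff matrix_vector_mult_def transpose_def axis_def if_distrib cong: if_cong)
  have eaea: "ea \<bullet> ea = 1" by (simp add: ea_def)
  have Mt: "transpose (M + t *\<^sub>R entry_dir a i) ** (M + t *\<^sub>R entry_dir a i)
      = A + t *\<^sub>R outer ei m + t *\<^sub>R outer m ei + t^2 *\<^sub>R outer ei ei"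
    unfolding entry_dir_outer ea_def[symmetric] ei_def[symmetric]
    by (simp add: tr_add transpose_scalar mm_add_l mm_add_r mm_scale_l mm_scale_r
        outer_mult_left outer_mult_right outer_mult_outer tM eaea A_def power2_eq_square mv_add_l mv_scale_l outer_mult_vec outer_add_left outer_scale_left algebra_simps del: transpose_matrix_vector)
  have LA: "L ** A = A + t *\<^sub>R outer ei m"
    unfolding L_def
    by (simp add: mm_add_r mm_scale_l outer_mult_left outer_scale_right As ABm del: transpose_matrix_vector)
  have my: "m \<bullet> y = t * d + s * c"
    by (simp add: y_def d_def inner_add_right mci)
  have Ay: "A *v y = t *\<^sub>R m + s *\<^sub>R ei"
    by (simp add: y_def mv_add_r mv_scale_r ABm Aci)
  have s1: "s * (1 + t*c) = t^2 * (1-d)" using nz' by (simp add: s_def)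
  have sc0: "s + t * (t * d + s * c) = s*(1+t*c) + t^2*d" by (simp add: algebra_simps power2_eq_square)
  have sc: "s + t * (t * d + s * c) = t^2"
    unfolding sc0 s1 by (simp add: algebra_simps)
  have LAR: "L ** A ** R = A + t *\<^sub>R outer ei m + t *\<^sub>R outer m ei + t^2 *\<^sub>R outer ei ei"
  proof -
    have "L ** A ** R = (A + t *\<^sub>R outer ei m) + outer ((A + t *\<^sub>R outer ei m) *v y) ei"
      unfolding LA R_def by (simp add: mm_add_l outer_mult_right)
    also have "(A + t *\<^sub>R outer ei m) *v y = t *\<^sub>R m + (s + t * (t * d + s * c)) *\<^sub>R ei"
      by (simp add: mv_add_l mv_scale_l outer_mult_vec Ay my algebra_simps)
    also have "outer (t *\<^sub>R m + (s + t * (t * d + s * c)) *\<^sub>R ei) ei = t *\<^sub>R outer m ei + t^2 *\<^sub>R outer ei ei"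
      unfolding sc by (simp add: outer_add_left outer_scale_left)
    finally show ?thesis by (simp add: algebra_simps)
  qed
  have dL: "det L = 1 + t * c"
    unfolding L_def by (simp add: det_outer_row ei_def c_def)
  have dR: "det R = 1 + t * c + s * b"
    unfolding R_def by (simp add: det_outer_col ei_def y_def c_def b_def column_def)
  have "det (transpose (M + t *\<^sub>R entry_dir a i) ** (M + t *\<^sub>R entry_dir a i)) = det L * det A * det R"
    unfolding Mt LAR[symmetric] by (simp add: det_mul)
  also have "\<dots> = det A * ((1 + t*c)^2 + t^2 * (1 - d) * b)"
    using nz' by (simp add: dL dR s_def field_simps power2_eq_square)
  finally show ?thesis by (simp add: A_def c_def d_def b_def m_def)
qed


lemma inner_transpose_mv: "(x::real^'p::finite) \<bullet> ((transpose (M::real^'p^'n::finite)) *v v) = (M *v x) \<bullet> v"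
  by (simp add: inner_vec_def matrix_vector_mult_def transpose_def sum_distrib_left sum_distrib_right mult_ac)
     (rule sum.swap)

lemma gram_quad: "(x::real^'p::finite) \<bullet> ((transpose (M::real^'p^'n::finite) ** M) *v x) = (M *v x) \<bullet> (M *v x)"
  by (simp add: matrix_vector_mul_assoc[symmetric] inner_transpose_mv del: transpose_matrix_vector)

lemma det_gram_pos:
  fixes M :: "real^'p::finite^'n::finite"
  assumes inv: "invertible (transpose M ** M)"
  shows "det (transpose M ** M) > 0"
proof (rule ccontr)
  define A where "A = transpose M ** M"
  define \<phi> where "\<phi> s = det ((1-s) *\<^sub>R mat 1 + s *\<^sub>R A)" for s :: real
  assume "\<not> det (transpose M ** M) > 0"
  then have "\<phi> 1 \<le> 0" by (simp add: \<phi>_def A_def)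
  moreover have "0 \<le> \<phi> 0" by (simp add: \<phi>_def)
  moreover have "\<forall>x. 0 \<le> x \<and> x \<le> 1 \<longrightarrow> isCont \<phi> x"
    unfolding \<phi>_def det_def by (auto intro!: continuous_intros)
  ultimately obtain s where s: "0 \<le> s" "s \<le> 1" "\<phi> s = 0"
    using IVT2[of \<phi> 1 0 0] by auto
  have ker: "x = 0" if "((1-s) *\<^sub>R mat 1 + s *\<^sub>R A) *v x = 0" for x
  proof -
    have "x \<bullet> (((1-s) *\<^sub>R mat 1 + s *\<^sub>R A) *v x) = 0" using that by simp
    then have eq: "(1-s) * (x \<bullet> x) + s * ((M *v x) \<bullet> (M *v x)) = 0"
      by (simp add: mv_add_l mv_scale_l inner_add_right gram_quad A_def)
    show "x = 0"
    proof (cases "s = 1")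
      case True
      then have "A *v x = 0" using that by simp
      moreover obtain B where "B ** A = mat 1" using inv by (auto simp: invertible_def A_def)
      ultimately show ?thesis using matrix_left_invertible_ker[of A] by blast
    next
      case False
      then have "1 - s > 0" using s by simp
      moreover have "s * ((M *v x) \<bullet> (M *v x)) \<ge> 0" using s by simp
      moreover have "x \<bullet> x \<ge> 0" by simp
      ultimately have "x \<bullet> x = 0" using eq
        by (smt (verit, best) mult_pos_pos mult_nonneg_nonneg)
      then show ?thesis by simp
    qed
  qed
  then have "invertible ((1-s) *\<^sub>R mat 1 + s *\<^sub>R A)"
    using matrix_left_invertible_ker invertible_left_inverse by blast
  then have "\<phi> s \<noteq> 0" by (simp add: \<phi>_def invertible_det_nz)
  with s show False by simp
qed


lemma second_deriv_local:
  fixes f g g' :: "real \<Rightarrow> real"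
  assumes U: "open U" "0 \<in> U" and fg: "\<And>t. t \<in> U \<Longrightarrow> f t = g t"
    and d1: "\<And>t. t \<in> U \<Longrightarrow> (g has_real_derivative g' t) (at t)"
    and d2: "(g' has_real_derivative g2) (at 0)"
  shows "deriv (deriv f) 0 = g2"
proof -
  have "deriv f t = g' t" if "t \<in> U" for t
  proof (rule DERIV_imp_deriv)
    show "(f has_real_derivative g' t) (at t)"
      by (rule has_field_derivative_transform_within_open[OF d1[OF that] U(1) that]) (simp add: fg)
  qed
  then have "(deriv f has_real_derivative g2) (at 0)"
    by (intro has_field_derivative_transform_within_open[OF d2 U]) simp
  then show ?thesis by (rule DERIV_imp_deriv)
qed

lemma second_deriv_quad:
  fixes K q1 q2 s0 s1 u v :: real and f :: "real \<Rightarrow> real"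
  assumes s0: "s0 > 0" and U: "open U" "0 \<in> U"
    and fg: "\<And>t. t \<in> U \<Longrightarrow> f t = K  *  (1 + q1 * t + q2 * t^2) powr u  *  (s0 + s1 * t + t^2) powr v"
    and pos: "\<And>t. t \<in> U \<Longrightarrow> 1 + q1 * t + q2 * t^2 > 0 \<and> s0 + s1 * t + t^2 > 0"
  shows "deriv (deriv f) 0 = K  *  s0 powr v  * 
     (u * (u-1) * q1^2 + 2 * u * q2 + 2 * u *  v * q1 *  s1/s0 + v * (v-1) *  s1^2/s0^2 + 2 *  v/s0)"
proof (rule second_deriv_local[OF U fg])
  define Q where "Q t = 1 + q1 * t + q2 * t^2" for t
  define S where "S t = s0 + s1 * t + t^2" for t
  define g' where "g' t = K  *  (u  *  Q t powr (u-1)  *  (q1 + 2 * q2 * t)  *  S t powr v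
        + Q t powr u  *  (v  *  S t powr (v-1)  *  (s1 + 2 * t)))" for t
  show "((\<lambda>t. K  *  (1 + q1 * t + q2 * t^2) powr u  *  (s0 + s1 * t + t^2) powr v) has_real_derivative g' t) (at t)"
    if "t \<in> U" for t
    using pos[OF that] unfolding g'_def Q_def S_def
    by (auto intro!: derivative_eq_intros simp: algebra_simps)
  have e1: "s0 powr (v - 1) = s0 powr v / s0" using s0 by (simp add: powr_diff)
  have e2: "s0 powr (v - 2) = s0 powr v / s0^2" using s0 by (simp add: powr_diff powr_realpow)
  show "(g' has_real_derivative K  *  s0 powr v  * 
     (u * (u-1) * q1^2 + 2 * u * q2 + 2 * u *  v * q1 *  s1/s0 + v * (v-1) *  s1^2/s0^2 + 2 *  v/s0)) (at 0)"
    unfolding g'_def Q_def S_def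
    apply (rule derivative_eq_intros refl | simp add: s0)+
    apply (rule disjI2)
    apply (simp add: e1 e2)
    using s0 apply (simp add: field_simps power2_eq_square)
    done
qed


lemma norm_col_sq: "(norm (column j (X::real^'p::finite^'n::finite)))^2 = (\<Sum>b\<in>UNIV. (X$b$j)^2)"
  unfolding power2_norm_eq_inner by (simp add: inner_vec_def column_def power2_eq_square)

lemma norm_powr_sq: "norm (x::'a::real_normed_vector) > 0 \<Longrightarrow> norm x powr r = ((norm x)^2) powr (r/2)"
proof -
  assume h: "norm x > 0"
  have "(norm x)^2 = norm x powr 2" using h by simp
  then show ?thesis by (simp only: powr_powr) simp
qed

lemma second_partial_formula:
  fixes M :: "real^'p::finite^'n::finite" and B :: "real^'p^'p" and \<gamma> :: real
  assumes AB: "(transpose M ** M) ** B = mat 1" and BA: "B ** (transpose M ** M) = mat 1"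
    and Dpos: "det (transpose M ** M) > 0" and Npos: "\<And>j. norm (column j M) > 0"
  shows "second_partial (pi_MSVS2 \<gamma>) M a i = pi_MSVS2 \<gamma> M *
    ((- (real CARD('n) - real CARD('p) - 1) / 2) * ((- (real CARD('n) - real CARD('p) - 1) / 2) - 1) * (2 * (B *v (M$a))$i)^2
     + 2 * (- (real CARD('n) - real CARD('p) - 1) / 2) * (((B *v (M$a))$i)^2 + (1 - (M$a) \<bullet> (B *v (M$a))) * B$i$i)
     + 2 * (- (real CARD('n) - real CARD('p) - 1) / 2) * (- \<gamma> / 2) * (2 * (B *v (M$a))$i) * (2 * M$a$i) / (norm (column i M))^2
     + (- \<gamma> / 2) * ((- \<gamma> / 2) - 1) * (2 * M$a$i)^2 / ((norm (column i M))^2)^2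
     + 2 * (- \<gamma> / 2) / (norm (column i M))^2)"
proof -
  define e where "e = - (real CARD('n) - real CARD('p) - 1) / 2"
  define v where "v = - \<gamma> / 2"
  define c where "c = (B *v (M$a))$i"
  define d where "d = (M$a) \<bullet> (B *v (M$a))"
  define b where "b = B$i$i"
  define N where "N = (norm (column i M))^2"
  define x where "x = M$a$i"
  define D where "D = det (transpose M ** M)"
  define K where "K = D powr e * (\<Prod>j\<in>UNIV - {i}. norm (column j M) powr (- \<gamma>))"
  define Q where "Q t = 1 + (2*c)*t + (c^2 + (1-d)*b)*t^2" for t
  define S where "S t = N + (2*x)*t + t^2" for t
  define U where "U = {t. 1 + t * c \<noteq> 0 \<and> 0 < Q t \<and> 0 < S t}"
  have N0: "N > 0" using Npos[of i] by (simp add: N_def)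
  have openU: "open U" unfolding U_def Q_def S_def
    by (intro open_Collect_conj open_Collect_neq open_Collect_less continuous_intros)
  have U0: "0 \<in> U" using N0 by (simp add: U_def Q_def S_def)
  have P: "pi_MSVS2 \<gamma> M = K * N powr v"
  proof -
    have "(\<Prod>j\<in>UNIV. norm (column j M) powr (- \<gamma>)) = norm (column i M) powr (- \<gamma>) * (\<Prod>j\<in>UNIV - {i}. norm (column j M) powr (- \<gamma>))"
      by (simp add: prod.remove[of UNIV i])
    moreover have "norm (column i M) powr (- \<gamma>) = N powr v"
      using Npos[of i] by (simp add: N_def v_def norm_powr_sq)
    ultimately show ?thesis by (simp add: pi_MSVS2_def K_def D_def e_def)
  qed
  have fg: "pi_MSVS2 \<gamma> (M + t *\<^sub>R entry_dir a i) = K * Q t powr e * S t powr v" if "t \<in> U" for t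
  proof -
    have t: "1 + t * c \<noteq> 0" "0 < Q t" "0 < S t" using that by (auto simp: U_def)
    have "det (transpose (M + t *\<^sub>R entry_dir a i) ** (M + t *\<^sub>R entry_dir a i)) = D * Q t"
      using det_update[OF AB BA, of t a i] t(1)
      by (simp add: D_def Q_def c_def d_def b_def algebra_simps power2_eq_square)
    then have d1: "det (transpose (M + t *\<^sub>R entry_dir a i) ** (M + t *\<^sub>R entry_dir a i)) powr e = D powr e * Q t powr e"
      using Dpos t(2) by (simp add: D_def powr_mult)
    have colj: "column j (M + t *\<^sub>R entry_dir a i) = column j M" if "j \<noteq> i" for j
      using that by (simp add: vec_eq_iff column_def entry_dir_def)
    have coli: "(norm (column i (M + t *\<^sub>R entry_dir a i)))^2 = S t"
    proof -
      have "(\<Sum>b\<in>UNIV. ((M + t *\<^sub>R entry_dir a i)$b$i)^2) = (\<Sum>b\<in>UNIV. (M$b$i)^2 + (if b = a then 2*x*t + t^2 else 0))"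
        by (rule sum.cong) (auto simp: entry_dir_def x_def power2_eq_square algebra_simps)
      also have "\<dots> = S t" by (simp add: sum.distrib S_def N_def norm_col_sq)
      finally show ?thesis by (simp add: norm_col_sq)
    qed
    have "norm (column i (M + t *\<^sub>R entry_dir a i)) > 0"
      using coli t(3) by (metis norm_ge_zero order_less_le power_zero_numeral zero_less_power2)
    then have ci: "norm (column i (M + t *\<^sub>R entry_dir a i)) powr (- \<gamma>) = S t powr v"
      by (simp add: norm_powr_sq coli v_def)
    have "(\<Prod>j\<in>UNIV. norm (column j (M + t *\<^sub>R entry_dir a i)) powr (- \<gamma>))
        = S t powr v * (\<Prod>j\<in>UNIV - {i}. norm (column j M) powr (- \<gamma>))"
      by (simp add: prod.remove[of UNIV i] ci colj)
    then show ?thesis unfolding pi_MSVS2_def d1[unfolded e_def] by (simp add: K_def e_def mult_ac)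
  qed
  have "second_partial (pi_MSVS2 \<gamma>) M a i = K * N powr v *
     (e * (e-1) * (2 * c)^2 + 2 * e * (c^2 + (1-d) * b) + 2 * e * v * (2 * c) * (2 * x) / N + v * (v-1) * (2 * x)^2 / N^2 + 2 * v / N)"
    unfolding second_partial_def
    apply (rule second_deriv_quad[OF N0 openU U0])
     apply (erule fg[unfolded Q_def S_def])
    apply (simp add: U_def Q_def S_def)
    done
  from this[unfolded P[symmetric]] show ?thesis unfolding e_def v_def c_def d_def b_def x_def N_def .
qed


lemma tmm_nth: "(transpose (X::real^'p::finite^'n::finite) ** (Y::real^'q::finite^'n)) $ i $ j = (\<Sum>a\<in>UNIV. X$a$i * Y$a$j)"
  by (simp add: matrix_matrix_mult_def transpose_def)

theorem proposition3:
  fixes M :: "real^'p::finite^'n::finite" and \<gamma> :: real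
  assumes "real CARD('n) - real CARD('p) - 1 > 0"
    and "\<gamma> \<ge> 0"
    and "invertible (transpose M ** M)"
  shows "laplacian (pi_MSVS2 \<gamma>) M =
    \<gamma> * (\<gamma> + real CARD('n) - 2 * real CARD('p))
      * (\<Sum>i\<in>UNIV. norm (column i M) powr (-2)) * pi_MSVS2 \<gamma> M"
proof -
  define A where "A = transpose M ** M"
  obtain B where AB: "A ** B = mat 1" and BA: "B ** A = mat 1"
    using assms(3) by (auto simp: invertible_def A_def)
  have As: "transpose A = A" by (simp add: A_def matrix_transpose_mul)
  have Bs: "transpose B = B" using inv_sym[OF AB BA As] .
  have Bsym: "B$j$k = B$k$j" for j k
    using arg_cong[OF Bs, of "\<lambda>X. X$k$j"] by (simp add: transpose_def)
  have Dpos: "det A > 0" using det_gram_pos[OF assms(3)] by (simp add: A_def)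
  have Npos: "norm (column j M) > 0" for j
  proof (rule ccontr)
    assume "\<not> norm (column j M) > 0"
    then have z: "column j M = 0" by simp
    have "A *v axis j 1 = 0"
    proof -
      have "M *v axis j 1 = column j M"
        by (simp add: vec_eq_iff column_def matrix_vector_mult_def axis_def if_distrib cong: if_cong)
      then show ?thesis by (simp add: A_def matrix_vector_mul_assoc[symmetric] z del: transpose_matrix_vector)
    qed
    then have "(B ** A) *v axis j 1 = 0" by (simp add: matrix_vector_mul_assoc[symmetric])
    then show False by (simp add: BA)
  qed
  define e where "e = - (real CARD('n) - real CARD('p) - 1) / 2"
  define v where "v = - \<gamma> / 2"
  define C where "C = M ** B"
  define N where "N i = (norm (column i M))^2" for i
  define d where "d a = (M$a) \<bullet> (B *v (M$a))" for a
  define P where "P = pi_MSVS2 \<gamma> M"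
  have cC: "(B *v (M$a))$i = C$a$i" for a i
    by (simp add: C_def matrix_vector_mult_def matrix_matrix_mult_def Bsym mult.commute)
  have N0: "N i > 0" for i using Npos[of i] by (simp add: N_def)
  have sp: "second_partial (pi_MSVS2 \<gamma>) M a i = P *
     (e * (e-1) * (2 * C$a$i)^2 + 2 * e * ((C$a$i)^2 + (1 - d a) * B$i$i)
      + 2 * e * v * (2 * C$a$i) * (2 * M$a$i) / N i + v * (v-1) * (2 * M$a$i)^2 / (N i)^2 + 2 * v / N i)" for a i
    using second_partial_formula[OF AB[unfolded A_def] BA[unfolded A_def] Dpos[unfolded A_def] Npos, of \<gamma> a i]
    unfolding P_def e_def v_def N_def d_def cC .
  define n where "n = real CARD('n)"
  define p where "p = real CARD('p)"
  have tC: "transpose C = B ** transpose M" by (simp add: C_def matrix_transpose_mul Bs)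
  have J1: "(\<Sum>a\<in>UNIV. (C$a$i)^2) = B$i$i" for i
  proof -
    have "transpose C ** C = B ** (A ** B)"
      unfolding tC by (simp add: A_def C_def matrix_mul_assoc)
    then have "transpose C ** C = B" by (simp add: AB)
    then show ?thesis using tmm_nth[of C C i i] by (simp add: power2_eq_square)
  qed
  have J2: "(\<Sum>a\<in>UNIV. d a) = p"
  proof -
    have da: "d a = (\<Sum>j\<in>UNIV. M$a$j * C$a$j)" for a
      by (simp add: d_def inner_vec_def cC)
    have "(\<Sum>a\<in>UNIV. d a) = (\<Sum>j\<in>UNIV. \<Sum>a\<in>UNIV. M$a$j * C$a$j)"
      unfolding da by (rule sum.swap)
    also have "\<dots> = (\<Sum>j\<in>UNIV. (transpose M ** C)$j$j)" by (simp add: tmm_nth)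
    also have "transpose M ** C = A ** B" by (simp add: C_def A_def matrix_mul_assoc)
    also have "A ** B = mat 1" by (rule AB)
    finally show ?thesis by (simp add: p_def mat_def)
  qed
  have J3: "(\<Sum>a\<in>UNIV. C$a$i * M$a$i) = 1" for i
  proof -
    have "transpose C ** M = B ** A"
      unfolding tC A_def by (simp add: matrix_mul_assoc)
    then have "transpose C ** M = mat 1" by (simp add: BA)
    then show ?thesis using tmm_nth[of C M i i] by (simp add: mat_def)
  qed
  have J4: "(\<Sum>a\<in>UNIV. (M$a$i)^2) = N i" for i
    by (simp add: N_def norm_col_sq)
  have Fi: "(\<Sum>a\<in>UNIV. (e * (e-1) * (2 * C$a$i)^2 + 2 * e * ((C$a$i)^2 + (1 - d a) * B$i$i)
      + 2 * e * v * (2 * C$a$i) * (2 * M$a$i) / N i + v * (v-1) * (2 * M$a$i)^2 / (N i)^2 + 2 * v / N i))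
     = (4*e*e - 2*e + 2 * e * (n - p)) * B$i$i + (8 * e * v + 4 * v * (v - 1) + 2 * v * n) / N i" for i
  proof -
    have pt: "e * (e-1) * (2 * C$a$i)^2 + 2 * e * ((C$a$i)^2 + (1 - d a) * B$i$i)
      + 2 * e * v * (2 * C$a$i) * (2 * M$a$i) / N i + v * (v-1) * (2 * M$a$i)^2 / (N i)^2 + 2 * v / N i
      = (4*e*e - 2*e) * (C$a$i)^2 + 2 * e * B$i$i - (2 * e * B$i$i) * d a + (8 * e * v / N i) * (C$a$i * M$a$i)
        + (4 * v * (v-1) / (N i)^2) * (M$a$i)^2 + 2 * v / N i" for a
      by (simp add: algebra_simps power2_eq_square)
    have "(\<Sum>a\<in>UNIV. (e * (e-1) * (2 * C$a$i)^2 + 2 * e * ((C$a$i)^2 + (1 - d a) * B$i$i)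
      + 2 * e * v * (2 * C$a$i) * (2 * M$a$i) / N i + v * (v-1) * (2 * M$a$i)^2 / (N i)^2 + 2 * v / N i))
      = (4*e*e - 2*e) * (\<Sum>a\<in>UNIV. (C$a$i)^2) + n * (2 * e * B$i$i) - (2 * e * B$i$i) * (\<Sum>a\<in>UNIV. d a)
        + (8 * e * v / N i) * (\<Sum>a\<in>UNIV. C$a$i * M$a$i) + (4 * v * (v-1) / (N i)^2) * (\<Sum>a\<in>UNIV. (M$a$i)^2) + n * (2 * v / N i)"
      unfolding pt by (simp add: sum.distrib sum_subtractf sum_distrib_left n_def)
    also have "\<dots> = (4*e*e - 2*e + 2 * e * (n - p)) * B$i$i + (8 * e * v + 4 * v * (v - 1) + 2 * v * n) / N i"
      unfolding J1 J2 J3 J4 using N0[of i] by (simp add: field_simps power2_eq_square)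
    finally show ?thesis .
  qed
  have e2: "2 * e = - (n - p - 1)" by (simp add: e_def n_def p_def)
  have coef0: "4*e*e - 2*e + 2 * e * (n - p) = 0"
  proof -
    have "4*e*e - 2*e + 2 * e * (n - p) = (2*e) * (2*e) - 2*e + 2 * e * (n - p)" by simp
    also have "\<dots> = 0" unfolding e2 by (simp add: algebra_simps)
    finally show ?thesis .
  qed
  have coef1: "8 * e * v + 4 * v * (v - 1) + 2 * v * n = \<gamma> * (\<gamma> + n - 2 * p)"
  proof -
    have "8 * e * v + 4 * v * (v - 1) + 2 * v * n = 4 * (2*e) * v + 4 * v * (v - 1) + 2 * v * n" by simp
    also have "\<dots> = \<gamma> * (\<gamma> + n - 2 * p)" unfolding e2 v_def by (simp add: algebra_simps)
    finally show ?thesis .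
  qed
  have "laplacian (pi_MSVS2 \<gamma>) M = (\<Sum>i\<in>UNIV. \<Sum>a\<in>UNIV. second_partial (pi_MSVS2 \<gamma>) M a i)"
    unfolding laplacian_def by (rule sum.swap)
  also have "\<dots> = (\<Sum>i\<in>UNIV. P * (\<gamma> * (\<gamma> + n - 2 * p) / N i))"
    unfolding sp sum_distrib_left[symmetric] Fi coef0 coef1 by simp
  also have "\<dots> = \<gamma> * (\<gamma> + n - 2 * p) * (\<Sum>i\<in>UNIV. norm (column i M) powr (-2)) * P"
  proof -
    have "norm (column i M) powr (-2) = 1 / N i" for i
      using Npos[of i] by (simp add: N_def powr_minus divide_inverse)
    then show ?thesis by (simp add: sum_distrib_left sum_distrib_right mult_ac)
  qed
  finally show ?thesis by (simp add: P_def n_def p_def)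
qed

end
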